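(* Consider an $n$-player team problem with common cost $c$ satisfying Assumptions A1, A4 and A5. Let $\{\mu_m\}$ and $\mu$ be information structures satisfying Assumption A3 with $\mu_m\to\mu$ setwise. Then the team value function is upper semicontinuous along this sequence: $$\limsup_{m\to\infty}J^*(c,\mu_m)\le J^*(c,\mu).$$
   Context: $\mathbb{X},\mathbb{Y}^1,\dots,\mathbb{Y}^n$ are standard Borel spaces. An information structure is a probability measure $\mu$ on $\mathbb{X}\times\mathbb{Y}^1\times\cdots\times\mathbb{Y}^n$; its $\mathbb{X}$-marginal $\zeta$ is the prior. A team problem consists of standard Borel action spaces $\mathbb{U}^i$ and a common measurable cost $c:\mathbb{X}\times\mathbb{U}^1\times\cdots\times\mathbb{U}^n\to\mathbb{R}$; for a team policy $\bar\gamma=(\gamma^1,\dots,\gamma^n)$ with measurable $\gamma^i:\mathbb{Y}^i\to\mathbb{U}^i$, $J(c,\mu,\bar\gamma)=\int c(x,\gamma^1(y^1),\dots,\gamma^n(y^n))\,d\mu$, and $J^*(c,\mu)=\inf_{\bar\gamma}J(c,\mu,\bar\gamma)$. Setwise convergence: $\mu_m(A)\to\mu(A)$ for every Borel set $A$. Assumptions: A1: the cost is measurable and bounded. A3: $\mu\ll\zeta(dx)\bar Q^1(dy^1)\cdots\bar Q^n(dy^n)$ for some probability measures $\bar Q^i$ on $\mathbb{Y}^i$. A4: each action space is compact. A5: the bounded measurable cost is continuous in the players' actions for each fixed $x$, and each action space is compact. *)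

theory Defs
  imports "HOL-Probability.Probability"
begin

text \<open>Standard Borel spaces are modelled as Borel subsets of Polish spaces
  (every standard Borel space is Borel-isomorphic to such a set).
  Players are indexed by {..<n}.  X is the whole Polish type 'x (with borel),
  Y i a Borel subset of the Polish type 'y, and U i a subset of the Polish type 'u.\<close>

abbreviation Ysp :: "(nat \<Rightarrow> 'y::topological_space set) \<Rightarrow> nat \<Rightarrow> 'y measure" where
  "Ysp Y i \<equiv> restrict_space borel (Y i)"

abbreviation Usp :: "(nat \<Rightarrow> 'u::topological_space set) \<Rightarrow> nat \<Rightarrow> 'u measure" where
  "Usp U i \<equiv> restrict_space borel (U i)"

definition info_space :: "nat \<Rightarrow> (nat \<Rightarrow> 'y::topological_space set)
    \<Rightarrow> ('x::topological_space \<times> (nat \<Rightarrow> 'y)) measure" where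
  "info_space n Y = (borel::'x measure) \<Otimes>\<^sub>M (\<Pi>\<^sub>M i\<in>{..<n}. Ysp Y i)"

definition info_structure :: "nat \<Rightarrow> (nat \<Rightarrow> 'y::topological_space set)
    \<Rightarrow> ('x::topological_space \<times> (nat \<Rightarrow> 'y)) measure \<Rightarrow> bool" where
  "info_structure n Y \<mu> \<longleftrightarrow> prob_space \<mu> \<and> sets \<mu> = sets (info_space n Y)"

definition prior :: "('x::topological_space \<times> 'b) measure \<Rightarrow> 'x measure" where
  "prior \<mu> = distr \<mu> borel fst"

definition team_policy :: "nat \<Rightarrow> (nat \<Rightarrow> 'y::topological_space set)
    \<Rightarrow> (nat \<Rightarrow> 'u::topological_space set) \<Rightarrow> (nat \<Rightarrow> 'y \<Rightarrow> 'u) \<Rightarrow> bool" where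
  "team_policy n Y U \<gamma> \<longleftrightarrow> (\<forall>i<n. \<gamma> i \<in> Ysp Y i \<rightarrow>\<^sub>M Usp U i)"

definition team_cost :: "nat \<Rightarrow> ('x \<Rightarrow> (nat \<Rightarrow> 'u) \<Rightarrow> real)
    \<Rightarrow> ('x \<times> (nat \<Rightarrow> 'y)) measure \<Rightarrow> (nat \<Rightarrow> 'y \<Rightarrow> 'u) \<Rightarrow> real" where
  "team_cost n c \<mu> \<gamma> = (\<integral>z. c (fst z) (\<lambda>i\<in>{..<n}. \<gamma> i (snd z i)) \<partial>\<mu>)"

text \<open>J*(c,\<mu>) = inf over team policies (extended-real valued; infimum of the empty set is \<infinity>).\<close>
definition team_value :: "nat \<Rightarrow> (nat \<Rightarrow> 'y::topological_space set)
    \<Rightarrow> (nat \<Rightarrow> 'u::topological_space set) \<Rightarrow> ('x \<Rightarrow> (nat \<Rightarrow> 'u) \<Rightarrow> real)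
    \<Rightarrow> ('x \<times> (nat \<Rightarrow> 'y)) measure \<Rightarrow> ereal" where
  "team_value n Y U c \<mu> = (INF \<gamma>\<in>{\<gamma>. team_policy n Y U \<gamma>}. ereal (team_cost n c \<mu> \<gamma>))"

definition assumption_A3 :: "nat \<Rightarrow> (nat \<Rightarrow> 'y::topological_space set)
    \<Rightarrow> ('x::topological_space \<times> (nat \<Rightarrow> 'y)) measure \<Rightarrow> bool" where
  "assumption_A3 n Y \<mu> \<longleftrightarrow> (\<exists>Q::nat \<Rightarrow> 'y measure.
      (\<forall>i<n. prob_space (Q i) \<and> sets (Q i) = sets (Ysp Y i)) \<and>
      absolutely_continuous (prior \<mu> \<Otimes>\<^sub>M (\<Pi>\<^sub>M i\<in>{..<n}. Q i)) \<mu>)"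

definition assumption_A1 :: "nat \<Rightarrow> (nat \<Rightarrow> 'u::topological_space set)
    \<Rightarrow> ('x::topological_space \<Rightarrow> (nat \<Rightarrow> 'u) \<Rightarrow> real) \<Rightarrow> bool" where
  "assumption_A1 n U c \<longleftrightarrow>
     (\<lambda>(x,u). c x u) \<in> borel_measurable ((borel::'x measure) \<Otimes>\<^sub>M (\<Pi>\<^sub>M i\<in>{..<n}. Usp U i)) \<and>
     (\<exists>B. \<forall>x. \<forall>u\<in>(\<Pi>\<^sub>E i\<in>{..<n}. U i). \<bar>c x u\<bar> \<le> B)"

definition assumption_A4 :: "nat \<Rightarrow> (nat \<Rightarrow> 'u::topological_space set) \<Rightarrow> bool" where
  "assumption_A4 n U \<longleftrightarrow> (\<forall>i<n. compact (U i))"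

definition assumption_A5 :: "nat \<Rightarrow> (nat \<Rightarrow> 'u::topological_space set)
    \<Rightarrow> ('x::topological_space \<Rightarrow> (nat \<Rightarrow> 'u) \<Rightarrow> real) \<Rightarrow> bool" where
  "assumption_A5 n U c \<longleftrightarrow> assumption_A1 n U c \<and> assumption_A4 n U \<and>
     (\<forall>x. continuous_on (\<Pi>\<^sub>E i\<in>{..<n}. U i) (c x))"

definition setwise_conv :: "(nat \<Rightarrow> 'a measure) \<Rightarrow> 'a measure \<Rightarrow> bool" where
  "setwise_conv \<mu>s \<mu> \<longleftrightarrow> (\<forall>A\<in>sets \<mu>. (\<lambda>m. measure (\<mu>s m) A) \<longlonglongrightarrow> measure \<mu> A)"

end

theory Submission
  imports Defs
begin

lemma floor_div_bounds:
  fixes y :: real and k :: nat assumes k: "k > 0"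
  shows "y - 1 / k < real_of_int \<lfloor>y * k\<rfloor> / k" "real_of_int \<lfloor>y * k\<rfloor> / k \<le> y"
proof -
  have a: "real_of_int \<lfloor>y * k\<rfloor> \<le> y * k" by (rule of_int_floor_le)
  have b: "y * k < real_of_int \<lfloor>y * k\<rfloor> + 1" by (rule real_of_int_floor_add_one_gt)
  have kp: "(0::real) < k" using k by simp
  show "real_of_int \<lfloor>y * k\<rfloor> / k \<le> y" using a kp by (simp add: divide_le_eq)
  have "(y * k - 1) / k < real_of_int \<lfloor>y * k\<rfloor> / k"
    using b kp by (intro divide_strict_right_mono) auto
  moreover have "(y * k - 1) / k = y - 1 / k" using kp by (simp add: diff_divide_distrib)
  ultimately show "y - 1 / k < real_of_int \<lfloor>y * k\<rfloor> / k" by simp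
qed
lemma floor_in_J:
  fixes y C :: real assumes "\<bar>y\<bar> \<le> C"
  shows "\<lfloor>y\<rfloor> \<in> {-(\<lceil>C\<rceil>+1)..\<lceil>C\<rceil>+1}"
proof -
  have "\<lfloor>y\<rfloor> \<le> \<lceil>C\<rceil>" using assms by (meson abs_le_D1 ceiling_mono floor_le_ceiling order_trans)
  moreover have "-(\<lceil>C\<rceil>+1) \<le> \<lfloor>y\<rfloor>"
  proof -
    have "-C \<le> y" using assms by linarith
    then have "\<lfloor>-C\<rfloor> \<le> \<lfloor>y\<rfloor>" by (rule floor_mono)
    moreover have "\<lfloor>-C\<rfloor> = - \<lceil>C\<rceil>" by (simp add: ceiling_def)
    ultimately show ?thesis by linarith
  qed
  ultimately show ?thesis by simp
qed

lemma simple_approx_integral: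
  fixes f :: "'a \<Rightarrow> real" and k :: nat
  assumes N: "prob_space N" and sN: "sets N = sets M"
    and f: "f \<in> borel_measurable M" and B: "\<forall>x\<in>space M. \<bar>f x\<bar> \<le> B" and k: "k > 0"
  defines "J \<equiv> {-(\<lceil>B * k\<rceil>+1)..\<lceil>B*k\<rceil>+1}"
  shows "(\<integral>x. real_of_int \<lfloor>f x * k\<rfloor> / k \<partial>N) =
     (\<Sum>j\<in>J. (real_of_int j / k) * measure N {x\<in>space M. \<lfloor>f x * k\<rfloor> = j})"
proof -
  interpret N: prob_space N by fact
  have sp: "space N = space M" using sN by (rule sets_eq_imp_space_eq)
  have fN: "f \<in> borel_measurable N" using f measurable_cong_sets[OF sN refl] by blast
  have meas: "{x\<in>space M. \<lfloor>f x * k\<rfloor> = j} \<in> sets N" for j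
  proof -
    have fk: "(\<lambda>x. f x * k) \<in> borel_measurable N" using fN by (rule borel_measurable_times) simp
    have h: "(\<lambda>x. \<lfloor>f x * k\<rfloor>) \<in> measurable N (count_space UNIV)"
      by (rule measurable_compose[OF fk measurable_real_floor])
    have "(\<lambda>x. \<lfloor>f x * k\<rfloor>) -` {j} \<inter> space N \<in> sets N"
      by (rule measurable_sets[OF h]) simp
    moreover have "(\<lambda>x. \<lfloor>f x * k\<rfloor>) -` {j} \<inter> space N = {x\<in>space M. \<lfloor>f x * k\<rfloor> = j}"
      using sp by auto
    ultimately show ?thesis by simp
  qed
  have eq: "real_of_int \<lfloor>f x * k\<rfloor> / k = (\<Sum>j\<in>J. (real_of_int j / k) * indicator {x\<in>space M. \<lfloor>f x * k\<rfloor> = j} x)"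
    if x: "x \<in> space N" for x
  proof -
    have "\<bar>f x\<bar> \<le> B" using B x sp by auto
    then have "\<bar>f x * k\<bar> \<le> B * k" using k by (simp add: abs_mult mult_right_mono)
    then have inJ: "\<lfloor>f x * k\<rfloor> \<in> J" unfolding J_def by (rule floor_in_J)
    then have "(\<Sum>j\<in>J. (real_of_int j / k) * indicator {x\<in>space M. \<lfloor>f x * k\<rfloor> = j} x)
       = (\<Sum>j\<in>J. if j = \<lfloor>f x * k\<rfloor> then real_of_int j / k else 0)"
      using x sp by (intro sum.cong) (auto simp: indicator_def)
    also have "\<dots> = real_of_int \<lfloor>f x * k\<rfloor> / k" using inJ unfolding J_def
      by (simp add: sum.delta')
    finally show ?thesis by simp
  qed
  have "(\<integral>x. real_of_int \<lfloor>f x * k\<rfloor> / k \<partial>N) = (\<integral>x. (\<Sum>j\<in>J. (real_of_int j / k) * indicator {x\<in>space M. \<lfloor>f x * k\<rfloor> = j} x) \<partial>N)"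
    by (rule Bochner_Integration.integral_cong) (auto simp: eq)
  also have "\<dots> = (\<Sum>j\<in>J. (\<integral>x. (real_of_int j / k) * indicator {x\<in>space M. \<lfloor>f x * k\<rfloor> = j} x \<partial>N))"
  proof (rule Bochner_Integration.integral_sum[where f="\<lambda>j x. (real_of_int j / k) * indicator {x\<in>space M. \<lfloor>f x * k\<rfloor> = j} x"])
    fix j
    have "integrable N (indicator {x\<in>space M. \<lfloor>f x * k\<rfloor> = j} :: _ \<Rightarrow> real)"
      using meas[of j] by (simp add: N.emeasure_finite less_top[symmetric])
    then show "integrable N (\<lambda>x. (real_of_int j / k) * indicator {x\<in>space M. \<lfloor>f x * k\<rfloor> = j} x)"
      by simp
  qed
  also have "\<dots> = (\<Sum>j\<in>J. (real_of_int j / k) * measure N {x\<in>space M. \<lfloor>f x * k\<rfloor> = j})"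
  proof (rule sum.cong[OF refl])
    fix j
    have "{x\<in>space M. \<lfloor>f x * k\<rfloor> = j} \<inter> space N = {x\<in>space M. \<lfloor>f x * k\<rfloor> = j}" using sp by auto
    then show "(\<integral>x. (real_of_int j / k) * indicator {x\<in>space M. \<lfloor>f x * k\<rfloor> = j} x \<partial>N) = (real_of_int j / k) * measure N {x\<in>space M. \<lfloor>f x * k\<rfloor> = j}"
      by simp
  qed
  finally show ?thesis .
qed

lemma approx_bound:
  fixes f :: "'a \<Rightarrow> real" and k :: nat
  assumes N: "prob_space N" and sN: "sets N = sets M"
    and f: "f \<in> borel_measurable M" and B: "\<forall>x\<in>space M. \<bar>f x\<bar> \<le> B" and k: "k > 0"
  shows "\<bar>(\<integral>x. f x \<partial>N) - (\<integral>x. real_of_int \<lfloor>f x * k\<rfloor> / k \<partial>N)\<bar> \<le> 1 / k"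
proof -
  interpret N: prob_space N by fact
  have sp: "space N = space M" using sN by (rule sets_eq_imp_space_eq)
  have fN: "f \<in> borel_measurable N" using f measurable_cong_sets[OF sN refl] by blast
  have gN: "(\<lambda>x. real_of_int \<lfloor>f x * k\<rfloor> / k) \<in> borel_measurable N" using fN by measurable
  have If: "integrable N f"
    by (rule N.integrable_const_bound[of _ B]) (use B sp fN in auto)
  have d1: "0 \<le> f x - real_of_int \<lfloor>f x * k\<rfloor> / k" for x
    using floor_div_bounds(2)[OF k, of "f x"] by simp
  have d2: "f x - real_of_int \<lfloor>f x * k\<rfloor> / k \<le> 1 / k" for x
    using floor_div_bounds(1)[OF k, of "f x"] by simp
  have Bg: "\<bar>real_of_int \<lfloor>f x * k\<rfloor> / k\<bar> \<le> B + 1" if "x \<in> space N" for x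
  proof -
    have fx: "\<bar>f x\<bar> \<le> B" using B that sp by auto
    have "1 / real k \<le> 1" using k by simp
    then show ?thesis using fx d1[of x] d2[of x] by linarith
  qed
  have Ig: "integrable N (\<lambda>x. real_of_int \<lfloor>f x * k\<rfloor> / k)"
    by (rule N.integrable_const_bound[of _ "B+1"]) (use Bg gN in auto)
  have eq: "(\<integral>x. f x \<partial>N) - (\<integral>x. real_of_int \<lfloor>f x * k\<rfloor> / k \<partial>N)
      = (\<integral>x. f x - real_of_int \<lfloor>f x * k\<rfloor> / k \<partial>N)"
    using If Ig by simp
  have "0 \<le> (\<integral>x. f x - real_of_int \<lfloor>f x * k\<rfloor> / k \<partial>N)"
    using d1 by (simp add: integral_nonneg_AE)
  moreover have "(\<integral>x. f x - real_of_int \<lfloor>f x * k\<rfloor> / k \<partial>N) \<le> (\<integral>x. 1 / k \<partial>N)"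
    by (rule integral_mono) (use d2 If Ig in auto)
  ultimately show ?thesis using eq N.prob_space by (simp only:) simp
qed

lemma meas_floor_set:
  fixes f :: "'a \<Rightarrow> real" and k :: nat
  assumes f: "f \<in> borel_measurable M"
  shows "{x\<in>space M. \<lfloor>f x * k\<rfloor> = j} \<in> sets M"
proof -
  have fk: "(\<lambda>x. f x * k) \<in> borel_measurable M" using f by (rule borel_measurable_times) simp
  have h: "(\<lambda>x. \<lfloor>f x * k\<rfloor>) \<in> measurable M (count_space UNIV)"
    by (rule measurable_compose[OF fk measurable_real_floor])
  have "(\<lambda>x. \<lfloor>f x * k\<rfloor>) -` {j} \<inter> space M \<in> sets M"
    by (rule measurable_sets[OF h]) simp
  moreover have "(\<lambda>x. \<lfloor>f x * k\<rfloor>) -` {j} \<inter> space M = {x\<in>space M. \<lfloor>f x * k\<rfloor> = j}"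
    by auto
  ultimately show ?thesis by simp
qed

lemma setwise_integral:
  fixes f :: "'a \<Rightarrow> real"
  assumes Ns: "\<And>m. prob_space (Ns m)" and sNs: "\<And>m. sets (Ns m) = sets M" and M: "prob_space M"
    and conv: "\<forall>A\<in>sets M. (\<lambda>m. measure (Ns m) A) \<longlonglongrightarrow> measure M A"
    and f: "f \<in> borel_measurable M" and B: "\<forall>x\<in>space M. \<bar>f x\<bar> \<le> B"
  shows "(\<lambda>m. \<integral>x. f x \<partial>Ns m) \<longlonglongrightarrow> (\<integral>x. f x \<partial>M)"
proof (rule LIMSEQ_I)
  fix r :: real assume r: "0 < r"
  define k :: nat where "k = nat \<lceil>3 / r\<rceil> + 1"
  have k: "k > 0" unfolding k_def by simp
  have "3 / r \<le> real (nat \<lceil>3 / r\<rceil>)" by linarith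
  then have "3 / r < k" unfolding k_def by simp
  then have k3: "1 / real k < r / 3" using r k by (simp add: field_simps)
  have meas: "{x\<in>space M. \<lfloor>f x * k\<rfloor> = j} \<in> sets M" for j
    using f by (rule meas_floor_set)
  have G: "(\<lambda>m. \<integral>x. real_of_int \<lfloor>f x * k\<rfloor> / k \<partial>Ns m) \<longlonglongrightarrow> (\<integral>x. real_of_int \<lfloor>f x * k\<rfloor> / k \<partial>M)"
    unfolding simple_approx_integral[OF Ns sNs f B k] simple_approx_integral[OF M refl f B k]
    using conv meas by (intro tendsto_sum tendsto_mult_left) auto
  obtain no where no: "\<And>m. m \<ge> no \<Longrightarrow> norm ((\<integral>x. real_of_int \<lfloor>f x * k\<rfloor> / k \<partial>Ns m) - (\<integral>x. real_of_int \<lfloor>f x * k\<rfloor> / k \<partial>M)) < r / 3"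
    using LIMSEQ_D[OF G, of "r/3"] r by auto
  show "\<exists>no. \<forall>m\<ge>no. norm ((\<integral>x. f x \<partial>Ns m) - (\<integral>x. f x \<partial>M)) < r"
  proof (intro exI allI impI)
    fix m assume "m \<ge> no"
    from no[OF this] approx_bound[OF Ns sNs f B k, of m] approx_bound[OF M refl f B k] k3
    show "norm ((\<integral>x. f x \<partial>Ns m) - (\<integral>x. f x \<partial>M)) < r" unfolding real_norm_def by linarith
  qed
qed

theorem theorem4p4:
  fixes n :: nat
    and Y :: "nat \<Rightarrow> 'y::polish_space set"
    and U :: "nat \<Rightarrow> 'u::polish_space set"
    and c :: "'x::polish_space \<Rightarrow> (nat \<Rightarrow> 'u) \<Rightarrow> real"
    and \<mu>s :: "nat \<Rightarrow> ('x \<times> (nat \<Rightarrow> 'y)) measure"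
    and \<mu> :: "('x \<times> (nat \<Rightarrow> 'y)) measure"
  assumes Y_borel: "\<forall>i<n. Y i \<in> sets borel"
    and A1: "assumption_A1 n U c"
    and A4: "assumption_A4 n U"
    and A5: "assumption_A5 n U c"
    and info_m: "\<forall>m. info_structure n Y (\<mu>s m)"
    and info: "info_structure n Y \<mu>"
    and A3_m: "\<forall>m. assumption_A3 n Y (\<mu>s m)"
    and A3: "assumption_A3 n Y \<mu>"
    and conv: "setwise_conv \<mu>s \<mu>"
  shows "limsup (\<lambda>m. team_value n Y U c (\<mu>s m)) \<le> team_value n Y U c \<mu>"
proof -
  from A1 obtain B where cm: "(\<lambda>(x,u). c x u) \<in> borel_measurable ((borel::'x measure) \<Otimes>\<^sub>M (\<Pi>\<^sub>M i\<in>{..<n}. Usp U i))"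
    and cB: "\<forall>x. \<forall>u\<in>(\<Pi>\<^sub>E i\<in>{..<n}. U i). \<bar>c x u\<bar> \<le> B"
    unfolding assumption_A1_def by blast
  have Pmu: "prob_space \<mu>" and Smu: "sets \<mu> = sets (info_space n Y)"
    using info unfolding info_structure_def by auto
  have Pmus: "prob_space (\<mu>s m)" and Smus: "sets (\<mu>s m) = sets \<mu>" for m
    using info_m Smu unfolding info_structure_def by auto
  have spmu: "space \<mu> = space (info_space n Y)" using Smu by (rule sets_eq_imp_space_eq)
  have cv: "\<forall>A\<in>sets \<mu>. (\<lambda>m. measure (\<mu>s m) A) \<longlonglongrightarrow> measure \<mu> A"
    using conv unfolding setwise_conv_def by blast
  have key: "(\<lambda>m. team_cost n c (\<mu>s m) \<gamma>) \<longlonglongrightarrow> team_cost n c \<mu> \<gamma>" if pol: "team_policy n Y U \<gamma>" for \<gamma>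
  proof -
    have gm: "\<gamma> i \<in> Ysp Y i \<rightarrow>\<^sub>M Usp U i" if "i < n" for i
      using pol that unfolding team_policy_def by blast
    define \<phi> where "\<phi> = (\<lambda>z::'x \<times> (nat \<Rightarrow> 'y). (fst z, \<lambda>i\<in>{..<n}. \<gamma> i (snd z i)))"
    have phim: "\<phi> \<in> info_space n Y \<rightarrow>\<^sub>M ((borel::'x measure) \<Otimes>\<^sub>M (\<Pi>\<^sub>M i\<in>{..<n}. Usp U i))"
      unfolding \<phi>_def info_space_def
    proof (rule measurable_Pair)
      show "fst \<in> (borel::'x measure) \<Otimes>\<^sub>M (\<Pi>\<^sub>M i\<in>{..<n}. Ysp Y i) \<rightarrow>\<^sub>M borel" by (rule measurable_fst)
      show "(\<lambda>z. \<lambda>i\<in>{..<n}. \<gamma> i (snd z i)) \<in> (borel::'x measure) \<Otimes>\<^sub>M (\<Pi>\<^sub>M i\<in>{..<n}. Ysp Y i) \<rightarrow>\<^sub>M (\<Pi>\<^sub>M i\<in>{..<n}. Usp U i)"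
      proof (rule measurable_restrict)
        fix i assume "i \<in> {..<n}"
        then have i: "i < n" by simp
        have "(\<lambda>z. snd z i) \<in> (borel::'x measure) \<Otimes>\<^sub>M (\<Pi>\<^sub>M i\<in>{..<n}. Ysp Y i) \<rightarrow>\<^sub>M Ysp Y i"
          by (rule measurable_compose[OF measurable_snd measurable_component_singleton]) (use i in simp)
        then show "(\<lambda>z. \<gamma> i (snd z i)) \<in> (borel::'x measure) \<Otimes>\<^sub>M (\<Pi>\<^sub>M i\<in>{..<n}. Ysp Y i) \<rightarrow>\<^sub>M Usp U i"
          by (rule measurable_compose[OF _ gm[OF i]])
      qed
    qed
    define f where "f = (\<lambda>z::'x \<times> (nat \<Rightarrow> 'y). c (fst z) (\<lambda>i\<in>{..<n}. \<gamma> i (snd z i)))"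
    have "(\<lambda>z. (\<lambda>(x,u). c x u) (\<phi> z)) \<in> borel_measurable (info_space n Y)"
      by (rule measurable_compose[OF phim cm])
    moreover have "(\<lambda>z. (\<lambda>(x,u). c x u) (\<phi> z)) = f" unfolding \<phi>_def f_def by auto
    ultimately have fm0: "f \<in> borel_measurable (info_space n Y)" by simp
    have fm: "f \<in> borel_measurable \<mu>" using fm0 measurable_cong_sets[OF Smu refl] by blast
    have fB: "\<forall>z\<in>space \<mu>. \<bar>f z\<bar> \<le> B"
    proof
      fix z assume "z \<in> space \<mu>"
      then have "\<phi> z \<in> space ((borel::'x measure) \<Otimes>\<^sub>M (\<Pi>\<^sub>M i\<in>{..<n}. Usp U i))"
        using spmu measurable_space[OF phim] by auto
      then have "snd (\<phi> z) \<in> (\<Pi>\<^sub>E i\<in>{..<n}. U i)"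
        by (simp add: space_pair_measure space_PiM space_restrict_space) (metis mem_Times_iff)
      then have "(\<lambda>i\<in>{..<n}. \<gamma> i (snd z i)) \<in> (\<Pi>\<^sub>E i\<in>{..<n}. U i)" unfolding \<phi>_def by simp
      then show "\<bar>f z\<bar> \<le> B" unfolding f_def using cB by blast
    qed
    have "(\<lambda>m. \<integral>z. f z \<partial>\<mu>s m) \<longlonglongrightarrow> (\<integral>z. f z \<partial>\<mu>)"
      by (rule setwise_integral[OF Pmus Smus Pmu cv fm fB])
    then show ?thesis unfolding team_cost_def f_def .
  qed
  show ?thesis
    unfolding team_value_def[of n Y U c \<mu>]
  proof (rule INF_greatest)
    fix \<gamma> assume "\<gamma> \<in> {\<gamma>. team_policy n Y U \<gamma>}"
    then have pol: "team_policy n Y U \<gamma>" by simp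
    have "limsup (\<lambda>m. team_value n Y U c (\<mu>s m)) \<le> limsup (\<lambda>m. ereal (team_cost n c (\<mu>s m) \<gamma>))"
      unfolding team_value_def
      by (rule Limsup_mono[OF always_eventually[OF allI[OF INF_lower]]]) (use pol in simp)
    also have "\<dots> = ereal (team_cost n c \<mu> \<gamma>)"
      by (rule lim_imp_Limsup) (use key[OF pol] in \<open>auto simp: lim_ereal\<close>)
    finally show "limsup (\<lambda>m. team_value n Y U c (\<mu>s m)) \<le> ereal (team_cost n c \<mu> \<gamma>)" .
  qed
qed

end
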